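(* Let $\mathcal{T}=\begin{pmatrix}\mathcal{A}&\mathcal{M}\\0&\mathcal{B}\end{pmatrix}$ be a triangular ring in which $\mathcal{A}$ and $\mathcal{B}$ are 2-torsion free. If $\phi:\mathcal{T}\to\mathcal{T}$ is an additive mapping such that $\phi(U)\circ V+U\circ\phi(V)=0$ for all $U,V\in\mathcal{T}$ with $UV=VU=0$, then there exist a derivation $\delta:\mathcal{T}\to\mathcal{T}$ and a multiplier $\eta:\mathcal{T}\to\mathcal{T}$ such that $\phi=\delta+\eta$. If moreover $\phi(I)=0$, then $\phi$ is a derivation.
   Context: A triangular ring: $\mathcal{A},\mathcal{B}$ are unital rings and $\mathcal{M}$ is a unital $(\mathcal{A},\mathcal{B})$-bimodule faithful on both sides (if $A\mathcal{M}=\{0\}$ then $A=0$; if $\mathcal{M}B=\{0\}$ then $B=0$); $\mathcal{T}$ is the set of matrices $\begin{pmatrix}A&M\\0&B\end{pmatrix}$ under usual matrix operations, with identity $I$. 2-torsion free: $2X=0\Rightarrow X=0$. $X\circ Y=XY+YX$. An additive $\delta$ is a derivation if $\delta(XY)=\delta(X)Y+X\delta(Y)$; an additive $\eta$ is a multiplier if $\eta(X)=\eta(I)X=X\eta(I)$ for all $X$. *)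

theory Defs
  imports Main
begin

definition unital_bimodule :: "('a::ring_1 \<Rightarrow> 'm::ab_group_add \<Rightarrow> 'm) \<Rightarrow> ('m \<Rightarrow> 'b::ring_1 \<Rightarrow> 'm) \<Rightarrow> bool" where
  "unital_bimodule lact ract \<longleftrightarrow>
     (\<forall>a a' m. lact (a + a') m = lact a m + lact a' m) \<and>
     (\<forall>a m m'. lact a (m + m') = lact a m + lact a m') \<and>
     (\<forall>a a' m. lact (a * a') m = lact a (lact a' m)) \<and>
     (\<forall>m. lact 1 m = m) \<and>
     (\<forall>m b b'. ract m (b + b') = ract m b + ract m b') \<and>
     (\<forall>m m' b. ract (m + m') b = ract m b + ract m' b) \<and>
     (\<forall>m b b'. ract m (b * b') = ract (ract m b) b') \<and>
     (\<forall>m. ract m 1 = m) \<and>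
     (\<forall>a m b. lact a (ract m b) = ract (lact a m) b)"

definition faithful_bimodule :: "('a::ring_1 \<Rightarrow> 'm::ab_group_add \<Rightarrow> 'm) \<Rightarrow> ('m \<Rightarrow> 'b::ring_1 \<Rightarrow> 'm) \<Rightarrow> bool" where
  "faithful_bimodule lact ract \<longleftrightarrow>
     (\<forall>a. (\<forall>m. lact a m = 0) \<longrightarrow> a = 0) \<and>
     (\<forall>b. (\<forall>m. ract m b = 0) \<longrightarrow> b = 0)"

definition two_torsion_free :: "'a::ab_group_add set \<Rightarrow> bool" where
  "two_torsion_free S \<longleftrightarrow> (\<forall>x\<in>S. x + x = 0 \<longrightarrow> x = 0)"

text \<open>Elements of the triangular ring T = [[A, M],[0, B]] are triples (a, m, b),
  standing for the matrix with entries a, m (top row) and 0, b (bottom row).\<close>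

definition tadd :: "'a::ring_1 \<times> 'm::ab_group_add \<times> 'b::ring_1 \<Rightarrow> 'a \<times> 'm \<times> 'b \<Rightarrow> 'a \<times> 'm \<times> 'b" where
  "tadd X Y = (fst X + fst Y, fst (snd X) + fst (snd Y), snd (snd X) + snd (snd Y))"

definition tzero :: "'a::ring_1 \<times> 'm::ab_group_add \<times> 'b::ring_1" where
  "tzero = (0, 0, 0)"

definition tone :: "'a::ring_1 \<times> 'm::ab_group_add \<times> 'b::ring_1" where
  "tone = (1, 0, 1)"

definition tmul :: "('a::ring_1 \<Rightarrow> 'm::ab_group_add \<Rightarrow> 'm) \<Rightarrow> ('m \<Rightarrow> 'b::ring_1 \<Rightarrow> 'm) \<Rightarrow>
    'a \<times> 'm \<times> 'b \<Rightarrow> 'a \<times> 'm \<times> 'b \<Rightarrow> 'a \<times> 'm \<times> 'b" where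
  "tmul lact ract X Y =
     (fst X * fst Y, lact (fst X) (fst (snd Y)) + ract (fst (snd X)) (snd (snd Y)), snd (snd X) * snd (snd Y))"

definition tjordan :: "('a::ring_1 \<Rightarrow> 'm::ab_group_add \<Rightarrow> 'm) \<Rightarrow> ('m \<Rightarrow> 'b::ring_1 \<Rightarrow> 'm) \<Rightarrow>
    'a \<times> 'm \<times> 'b \<Rightarrow> 'a \<times> 'm \<times> 'b \<Rightarrow> 'a \<times> 'm \<times> 'b" where
  "tjordan lact ract X Y = tadd (tmul lact ract X Y) (tmul lact ract Y X)"

definition t_additive :: "('a::ring_1 \<times> 'm::ab_group_add \<times> 'b::ring_1 \<Rightarrow> 'a \<times> 'm \<times> 'b) \<Rightarrow> bool" where
  "t_additive f \<longleftrightarrow> (\<forall>X Y. f (tadd X Y) = tadd (f X) (f Y))"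

definition t_derivation :: "('a::ring_1 \<Rightarrow> 'm::ab_group_add \<Rightarrow> 'm) \<Rightarrow> ('m \<Rightarrow> 'b::ring_1 \<Rightarrow> 'm) \<Rightarrow>
    ('a \<times> 'm \<times> 'b \<Rightarrow> 'a \<times> 'm \<times> 'b) \<Rightarrow> bool" where
  "t_derivation lact ract d \<longleftrightarrow> t_additive d \<and>
     (\<forall>X Y. d (tmul lact ract X Y) = tadd (tmul lact ract (d X) Y) (tmul lact ract X (d Y)))"

definition t_multiplier :: "('a::ring_1 \<Rightarrow> 'm::ab_group_add \<Rightarrow> 'm) \<Rightarrow> ('m \<Rightarrow> 'b::ring_1 \<Rightarrow> 'm) \<Rightarrow>
    ('a \<times> 'm \<times> 'b \<Rightarrow> 'a \<times> 'm \<times> 'b) \<Rightarrow> bool" where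
  "t_multiplier lact ract e \<longleftrightarrow> t_additive e \<and>
     (\<forall>X. e X = tmul lact ract (e tone) X \<and> e X = tmul lact ract X (e tone))"

end

theory Submission imports Defs begin

lemma grp1: "x - y + (z - w) = (0::'g::ab_group_add) \<Longrightarrow> x - w = y - z"
  by (simp add: algebra_simps)

lemma addf:
  fixes f :: "'x::ab_group_add \<Rightarrow> 'y::ab_group_add"
  assumes "\<And>x y. f (x+y) = f x + f y"
  shows "f 0 = 0" "f (-x) = - f x" "f (x - y) = f x - f y"
proof -
  show z: "f 0 = 0" using assms[of 0 0] by simp
  show n: "f (-x) = - f x" using assms[of x "-x"] z by (metis add.right_inverse minus_unique)
  have n2: "f (-y) = - f y" using assms[of y "-y"] z by (metis add.right_inverse minus_unique)
  show "f (x - y) = f x - f y" using assms[of x "-y"] n2 by simp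
qed

locale tri =
  fixes lact :: "'a::ring_1 \<Rightarrow> 'm::ab_group_add \<Rightarrow> 'm"
    and ract :: "'m \<Rightarrow> 'b::ring_1 \<Rightarrow> 'm"
    and \<phi> :: "'a \<times> 'm \<times> 'b \<Rightarrow> 'a \<times> 'm \<times> 'b"
  assumes bm: "unital_bimodule lact ract"
    and fa: "faithful_bimodule lact ract"
    and tA: "two_torsion_free (UNIV :: 'a set)"
    and tB: "two_torsion_free (UNIV :: 'b set)"
    and ad: "t_additive \<phi>"
    and H: "\<forall>U V. tmul lact ract U V = tzero \<and> tmul lact ract V U = tzero \<longrightarrow>
           tadd (tjordan lact ract (\<phi> U) V) (tjordan lact ract U (\<phi> V)) = tzero"
begin

lemma L1[simp]: "lact (a + a') m = lact a m + lact a' m" using bm by (simp add: unital_bimodule_def)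
lemma L2[simp]: "lact a (m + m') = lact a m + lact a m'" using bm by (simp add: unital_bimodule_def)
lemma L3[simp]: "lact (a * a') m = lact a (lact a' m)" using bm by (simp add: unital_bimodule_def)
lemma L4[simp]: "lact 1 m = m" using bm by (simp add: unital_bimodule_def)
lemma R1[simp]: "ract m (b + b') = ract m b + ract m b'" using bm by (simp add: unital_bimodule_def)
lemma R2[simp]: "ract (m + m') b = ract m b + ract m' b" using bm by (simp add: unital_bimodule_def)
lemma R3[simp]: "ract m (b * b') = ract (ract m b) b'" using bm by (simp add: unital_bimodule_def)
lemma R4[simp]: "ract m 1 = m" using bm by (simp add: unital_bimodule_def)
lemma LR[simp]: "lact a (ract m b) = ract (lact a m) b" using bm by (simp add: unital_bimodule_def)

lemma L0[simp]: "lact a 0 = 0" "lact a (-m) = - lact a m" "lact a (m - m') = lact a m - lact a m'"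
  using addf[of "lact a"] by simp_all
lemma L0'[simp]: "lact 0 m = 0" "lact (-a) m = - lact a m" "lact (a - a') m = lact a m - lact a' m"
  using addf[of "\<lambda>a. lact a m"] by simp_all
lemma R0[simp]: "ract m 0 = 0" "ract m (-b) = - ract m b" "ract m (b - b') = ract m b - ract m b'"
  using addf[of "ract m"] by simp_all
lemma R0'[simp]: "ract 0 b = 0" "ract (-m) b = - ract m b" "ract (m - m') b = ract m b - ract m' b"
  using addf[of "\<lambda>m. ract m b"] by simp_all

definition "f1 a = fst (\<phi> (a,0,0))"
definition "f2 a = fst (snd (\<phi> (a,0,0)))"
definition "f3 a = snd (snd (\<phi> (a,0,0)))"
definition "g1 a = fst (\<phi> (0,a,0))"
definition "g2 a = fst (snd (\<phi> (0,a,0)))"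
definition "g3 a = snd (snd (\<phi> (0,a,0)))"
definition "h1 a = fst (\<phi> (0,0,a))"
definition "h2 a = fst (snd (\<phi> (0,0,a)))"
definition "h3 a = snd (snd (\<phi> (0,0,a)))"

lemma phiadd: "\<phi> (tadd X Y) = tadd (\<phi> X) (\<phi> Y)" using ad unfolding t_additive_def by blast

lemma phi_decomp: "\<phi> (a,m,b) = (f1 a + g1 m + h1 b, f2 a + g2 m + h2 b, f3 a + g3 m + h3 b)"
proof -
  have "(a,m,b) = tadd (a,0,0) (tadd (0,m,0) (0,0,b))" by (simp add: tadd_def)
  hence "\<phi> (a,m,b) = tadd (\<phi> (a,0,0)) (tadd (\<phi> (0,m,0)) (\<phi> (0,0,b)))" by (simp add: phiadd)
  thus ?thesis by (simp add: tadd_def f1_def f2_def f3_def g1_def g2_def g3_def h1_def h2_def h3_def add.assoc)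
qed

lemma fadd: 
  "f1 (a+a') = f1 a + f1 a'" "f2 (a+a') = f2 a + f2 a'" "f3 (a+a') = f3 a + f3 a'"
  "g1 (m+m') = g1 m + g1 m'" "g2 (m+m') = g2 m + g2 m'" "g3 (m+m') = g3 m + g3 m'"
  "h1 (b+b') = h1 b + h1 b'" "h2 (b+b') = h2 b + h2 b'" "h3 (b+b') = h3 b + h3 b'"
proof -
  have a: "\<phi> (a+a',0,0) = tadd (\<phi> (a,0,0)) (\<phi> (a',0,0))" using phiadd[of "(a,0,0)" "(a',0,0)"] by (simp add: tadd_def)
  have m: "\<phi> (0,m+m',0) = tadd (\<phi> (0,m,0)) (\<phi> (0,m',0))" using phiadd[of "(0,m,0)" "(0,m',0)"] by (simp add: tadd_def)
  have b: "\<phi> (0,0,b+b') = tadd (\<phi> (0,0,b)) (\<phi> (0,0,b'))" using phiadd[of "(0,0,b)" "(0,0,b')"] by (simp add: tadd_def)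
  show "f1 (a+a') = f1 a + f1 a'" "f2 (a+a') = f2 a + f2 a'" "f3 (a+a') = f3 a + f3 a'"
    using a by (simp_all add: f1_def f2_def f3_def tadd_def)
  show "g1 (m+m') = g1 m + g1 m'" "g2 (m+m') = g2 m + g2 m'" "g3 (m+m') = g3 m + g3 m'"
    using m by (simp_all add: g1_def g2_def g3_def tadd_def)
  show "h1 (b+b') = h1 b + h1 b'" "h2 (b+b') = h2 b + h2 b'" "h3 (b+b') = h3 b + h3 b'"
    using b by (simp_all add: h1_def h2_def h3_def tadd_def)
qed

lemmas fz[simp] = addf[of f1, OF fadd(1)] addf[of f2, OF fadd(2)] addf[of f3, OF fadd(3)]
  addf[of g1, OF fadd(4)] addf[of g2, OF fadd(5)] addf[of g3, OF fadd(6)]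
  addf[of h1, OF fadd(7)] addf[of h2, OF fadd(8)] addf[of h3, OF fadd(9)]

lemma HH: assumes "tmul lact ract U V = tzero" "tmul lact ract V U = tzero"
  shows "tadd (tjordan lact ract (\<phi> U) V) (tjordan lact ract U (\<phi> V)) = tzero"
  using H assms by blast

lemma C1: "a * h1 b + h1 b * a = 0 \<and> ract (f2 a) b + lact a (h2 b) = 0 \<and> f3 a * b + b * f3 a = 0"
proof -
  have "tadd (tjordan lact ract (\<phi> (a,0,0)) (0,0,b)) (tjordan lact ract (a,0,0) (\<phi> (0,0,b))) = tzero"
    by (rule HH) (simp_all add: tmul_def tzero_def)
  then show ?thesis by (simp add: phi_decomp tjordan_def tmul_def tadd_def tzero_def)
qed

lemma C3: "a * (h1 b - g1 (ract m b)) + (h1 b - g1 (ract m b)) * a = 0 \<and>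
     - ract (lact (f1 a) m) b - ract (lact (g1 (lact a m)) m) b +
     (ract (f2 a) b + ract (g2 (lact a m)) b) +
     (- ract (ract m b) (f3 a) - ract (ract m b) (g3 (lact a m))) +
     (lact a (h2 b) - lact a (g2 (ract m b)) +
      (ract (lact a m) (h3 b) - ract (lact a m) (g3 (ract m b))) +
      (lact (h1 b) (lact a m) - lact (g1 (ract m b)) (lact a m))) =
     0 \<and>
     (f3 a + g3 (lact a m)) * b + b * (f3 a + g3 (lact a m)) = 0"
proof -
  have "tadd (tjordan lact ract (\<phi> (a,lact a m,0)) (0,-ract m b,b)) (tjordan lact ract (a,lact a m,0) (\<phi> (0,-ract m b,b))) = tzero"
    by (rule HH) (simp_all add: tmul_def tzero_def)
  then show ?thesis by (simp add: phi_decomp tjordan_def tmul_def tadd_def tzero_def)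
qed

lemma tfA: "x + x = (0::'a) \<Longrightarrow> x = 0" using tA unfolding two_torsion_free_def by blast
lemma tfB: "x + x = (0::'b) \<Longrightarrow> x = 0" using tB unfolding two_torsion_free_def by blast
lemma faA: "(\<And>m. lact a m = lact a' m) \<Longrightarrow> a = a'"
proof -
  assume "\<And>m. lact a m = lact a' m"
  hence "\<forall>m. lact (a - a') m = 0" by simp
  hence "a - a' = 0" using fa unfolding faithful_bimodule_def by blast
  thus "a = a'" by simp
qed
lemma faB: "(\<And>m. ract m b = ract m b') \<Longrightarrow> b = b'"
proof -
  assume "\<And>m. ract m b = ract m b'"
  hence "\<forall>m. ract m (b - b') = 0" by simp
  hence "b - b' = 0" using fa unfolding faithful_bimodule_def by blast
  thus "b = b'" by simp
qed

lemma h1z[simp]: "h1 b = 0" apply (rule tfA) using C1[of 1 b] by simp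
lemma f3z[simp]: "f3 a = 0" apply (rule tfB) using C1[of a 1] by simp
lemma h2e: "h2 b = - ract (f2 1) b" using C1[of 1 b] by (simp add: eq_neg_iff_add_eq_0 add.commute)
lemma f2e: "f2 a = lact a (f2 1)" using C1[of a 1] h2e[of 1] by (simp add: eq_neg_iff_add_eq_0)
lemma g1z[simp]: "g1 m = 0"
proof -
  have "- g1 m = g1 m" using C3[of 1 1 m] by simp
  hence "g1 m + g1 m = 0" by (metis add.left_inverse)
  thus ?thesis by (rule tfA)
qed
lemma g3z[simp]: "g3 m = 0" apply (rule tfB) using C3[of 1 1 m] by simp

lemma key: "ract (g2 (lact a m)) b - lact a (g2 (ract m b)) = ract (lact (f1 a) m) b - ract (lact a m) (h3 b)"
  using C3[of a b m] f2e[of a] by (intro grp1) (simp add: h2e[of b])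

definition "c = f1 1"
definition "c' = h3 1"
definition "m0 = f2 1"
definition "d1 a = f1 a - c * a"
definition "d2 m = g2 m - lact c m"
definition "d3 b = h3 b - c' * b"

lemma cm[simp]: "lact c m = ract m c'"
  using key[of 1 m 1] unfolding c_def c'_def by simp

lemma cA: "c * a = a * c" by (rule faA) simp
lemma cB: "c' * b = b * c'" by (rule faB) (metis R3 cm LR)

lemma dA': "lact (d1 a) m = d2 (lact a m) - lact a (d2 m)"
  using key[of a m 1] unfolding d1_def d2_def by (simp add: c'_def algebra_simps)
lemma dB': "ract m (d3 b) = d2 (ract m b) - ract (d2 m) b"
  using key[of 1 m b, folded c_def] unfolding d3_def d2_def by (simp add: algebra_simps)

lemma d1m: "d1 (a * a') = d1 a * a' + a * d1 a'"
  by (rule faA) (simp add: dA')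
lemma d3m: "d3 (b * b') = d3 b * b' + b * d3 b'"
  by (rule faB) (simp add: dB')

lemma dadd: "d1 (a + a') = d1 a + d1 a'" "d2 (m + m') = d2 m + d2 m'" "d3 (b + b') = d3 b + d3 b'"
  by (simp_all add: d1_def d2_def d3_def fadd algebra_simps)

definition "eta X = tmul lact ract (c,0,c') X"
definition "del X = (fst (\<phi> X) - fst (eta X), fst (snd (\<phi> X)) - fst (snd (eta X)), snd (snd (\<phi> X)) - snd (snd (eta X)))"

lemma eta_f: "eta (a,m,b) = (c*a, ract m c', c'*b)"
  by (simp add: eta_def tmul_def)

lemma del_f: "del (a,m,b) = (d1 a, lact a m0 - ract m0 b + d2 m, d3 b)"
  by (simp add: del_def eta_f phi_decomp d1_def d2_def d3_def m0_def f2e[of a] h2e[of b] algebra_simps)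

lemma del_der: "t_derivation lact ract del"
  unfolding t_derivation_def t_additive_def
proof (intro conjI allI)
  fix X Y :: "'a \<times> 'm \<times> 'b"
  obtain a m b where X: "X = (a,m,b)" by (cases X) auto
  obtain a' m' b' where Y: "Y = (a',m',b')" by (cases Y) auto
  show "del (tadd X Y) = tadd (del X) (del Y)"
    by (simp add: X Y tadd_def del_f dadd algebra_simps)
  show "del (tmul lact ract X Y) = tadd (tmul lact ract (del X) Y) (tmul lact ract X (del Y))"
    by (simp add: X Y tadd_def tmul_def del_f dadd d1m d3m dA' dB' algebra_simps)
qed

lemma eta_mult: "t_multiplier lact ract eta"
  unfolding t_multiplier_def t_additive_def
proof (intro conjI allI)
  fix X Y :: "'a \<times> 'm \<times> 'b"
  obtain a m b where X: "X = (a,m,b)" by (cases X) auto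
  obtain a' m' b' where Y: "Y = (a',m',b')" by (cases Y) auto
  show "eta (tadd X Y) = tadd (eta X) (eta Y)"
    by (simp add: X Y tadd_def eta_f algebra_simps)
  show "eta X = tmul lact ract (eta tone) X"
    by (simp add: X tone_def tmul_def eta_f)
  show "eta X = tmul lact ract X (eta tone)"
    by (simp add: X tone_def tmul_def eta_f cA cB)
qed

lemma main: "(\<exists>\<delta> \<eta>. t_derivation lact ract \<delta> \<and> t_multiplier lact ract \<eta> \<and>
            (\<forall>X. \<phi> X = tadd (\<delta> X) (\<eta> X)))
         \<and> (\<phi> tone = tzero \<longrightarrow> t_derivation lact ract \<phi>)"
proof
  show "\<exists>\<delta> \<eta>. t_derivation lact ract \<delta> \<and> t_multiplier lact ract \<eta> \<and>
            (\<forall>X. \<phi> X = tadd (\<delta> X) (\<eta> X))"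
    by (intro exI[of _ del] exI[of _ eta] conjI del_der eta_mult allI) (simp add: del_def tadd_def)
  show "\<phi> tone = tzero \<longrightarrow> t_derivation lact ract \<phi>"
  proof
    assume "\<phi> tone = tzero"
    hence "c = 0" "c' = 0" by (simp_all add: tone_def tzero_def phi_decomp c_def c'_def)
    hence "\<phi> = del" by (auto simp: del_def eta_f fun_eq_iff)
    thus "t_derivation lact ract \<phi>" using del_der by simp
  qed
qed

end

theorem theorem2p11:
  fixes lact :: "'a::ring_1 \<Rightarrow> 'm::ab_group_add \<Rightarrow> 'm"
    and ract :: "'m \<Rightarrow> 'b::ring_1 \<Rightarrow> 'm"
    and \<phi> :: "'a \<times> 'm \<times> 'b \<Rightarrow> 'a \<times> 'm \<times> 'b"
  assumes "unital_bimodule lact ract"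
    and "faithful_bimodule lact ract"
    and "two_torsion_free (UNIV :: 'a set)"
    and "two_torsion_free (UNIV :: 'b set)"
    and "t_additive \<phi>"
    and "\<forall>U V. tmul lact ract U V = tzero \<and> tmul lact ract V U = tzero \<longrightarrow>
           tadd (tjordan lact ract (\<phi> U) V) (tjordan lact ract U (\<phi> V)) = tzero"
  shows "(\<exists>\<delta> \<eta>. t_derivation lact ract \<delta> \<and> t_multiplier lact ract \<eta> \<and>
            (\<forall>X. \<phi> X = tadd (\<delta> X) (\<eta> X)))
         \<and> (\<phi> tone = tzero \<longrightarrow> t_derivation lact ract \<phi>)"
  by (rule tri.main) (rule tri.intro; fact assms)+

end
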